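(* The problems EE-NCL and EE-ANCL coincide: an NCL machine with two distinguished edges $e_a,e_b$ and target orientations for them is a yes-instance of EE-NCL if and only if it is a yes-instance of EE-ANCL.
   Context: An NCL machine is an undirected 3-connected 3-regular planar graph whose vertices are of two types, AND and OR; of the three edges incident to an AND vertex, one is designated its output edge and the other two its input edges. A legal configuration is an orientation of all edges such that (i) for each AND vertex, either its output edge is directed inward or both its input edges are directed inward, and (ii) for each OR vertex, at least one of its three incident edges is directed inward. A legal move reverses a single edge so that the resulting configuration is again legal. EE-NCL (Edge-to-Edge for NCL machines): given an NCL machine with two distinguished edges $e_a,e_b$ and a target orientation for each, decide whether there exist legal configurations $A$ and $B$ such that $e_a$ has its target orientation in $A$, $e_b$ has its target orientation in $B$, and some finite sequence of legal moves leads from $A$ to $B$ (edges may be reversed arbitrarily many times). EE-ANCL (asynchronous version): same input and question, except that moves are asynchronous in continuous time over a bounded timespan: any edge may start reversing at any time, and its reversal phase lasts some strictly positive amount of time (no two reversal phases of the same edge overlap, but different edges may be reversing simultaneously); while an edge is in its reversal phase its orientation is undefined and it is directed toward neither endpoint; at every time both vertex constraints (i) and (ii) must hold, counting only edges with defined orientation; and no edge is reversed infinitely many times in a bounded timespan. The question is whether one can go in this way from a legal configuration $A$ with $e_a$ in its target orientation to a configuration $B$ with $e_b$ in its target orientation. *)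

theory Defs
  imports "HOL-Analysis.Analysis"
begin

datatype vkind = AND | OR

text \<open>An NCL machine: vertex set, edge set (edges are identifiers with an ordered
pair of endpoints giving a reference direction), the type of each vertex, and for AND
vertices the designated output edge.\<close>

record ('v, 'e) ncl =
  verts :: "'v set"
  edges :: "'e set"
  ends  :: "'e \<Rightarrow> 'v \<times> 'v"
  kind  :: "'v \<Rightarrow> vkind"
  outp  :: "'v \<Rightarrow> 'e"

definition eset :: "('v, 'e) ncl \<Rightarrow> 'e \<Rightarrow> 'v set" where
  "eset M e = {fst (ends M e), snd (ends M e)}"

definition simple_graph :: "('v, 'e) ncl \<Rightarrow> bool" where
  "simple_graph M \<longleftrightarrow> finite (verts M) \<and> finite (edges M) \<and>
     (\<forall>e\<in>edges M. fst (ends M e) \<in> verts M \<and> snd (ends M e) \<in> verts M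
                    \<and> fst (ends M e) \<noteq> snd (ends M e)) \<and>
     (\<forall>e\<in>edges M. \<forall>e'\<in>edges M. eset M e = eset M e' \<longrightarrow> e = e')"

definition cubic :: "('v, 'e) ncl \<Rightarrow> bool" where
  "cubic M \<longleftrightarrow> (\<forall>v\<in>verts M. card {e\<in>edges M. v \<in> eset M e} = 3)"

definition adj_avoid :: "('v, 'e) ncl \<Rightarrow> 'v set \<Rightarrow> 'v \<Rightarrow> 'v \<Rightarrow> bool" where
  "adj_avoid M S u v \<longleftrightarrow> u \<notin> S \<and> v \<notin> S \<and> (\<exists>e\<in>edges M. eset M e = {u, v})"

definition connected_avoid :: "('v, 'e) ncl \<Rightarrow> 'v set \<Rightarrow> bool" where
  "connected_avoid M S \<longleftrightarrow>
     (\<forall>u\<in>verts M - S. \<forall>v\<in>verts M - S. (adj_avoid M S)\<^sup>*\<^sup>* u v)"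

definition three_connected :: "('v, 'e) ncl \<Rightarrow> bool" where
  "three_connected M \<longleftrightarrow> card (verts M) \<ge> 4 \<and>
     (\<forall>S. S \<subseteq> verts M \<and> card S \<le> 2 \<longrightarrow> connected_avoid M S)"

definition planar :: "('v, 'e) ncl \<Rightarrow> bool" where
  "planar M \<longleftrightarrow> (\<exists>(pos :: 'v \<Rightarrow> complex) (\<gamma> :: 'e \<Rightarrow> real \<Rightarrow> complex).
     inj_on pos (verts M) \<and>
     (\<forall>e\<in>edges M. arc (\<gamma> e) \<and> pathstart (\<gamma> e) = pos (fst (ends M e))
                   \<and> pathfinish (\<gamma> e) = pos (snd (ends M e))) \<and>
     (\<forall>e\<in>edges M. \<forall>e'\<in>edges M. e \<noteq> e' \<longrightarrow>
         path_image (\<gamma> e) \<inter> path_image (\<gamma> e') \<subseteq> pos ` (eset M e \<inter> eset M e')) \<and>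
     (\<forall>e\<in>edges M. \<forall>v\<in>verts M. pos v \<in> path_image (\<gamma> e) \<longrightarrow> v \<in> eset M e))"

definition ncl_machine :: "('v, 'e) ncl \<Rightarrow> bool" where
  "ncl_machine M \<longleftrightarrow> simple_graph M \<and> cubic M \<and> three_connected M \<and> planar M \<and>
     (\<forall>v\<in>verts M. kind M v = AND \<longrightarrow> outp M v \<in> edges M \<and> v \<in> eset M (outp M v))"

text \<open>An orientation of edge e is a boolean: True means directed from fst (ends e)
towards snd (ends e), False the reverse. A partial orientation maps an edge to None
while it is undefined (in its reversal phase).\<close>

definition head :: "('v, 'e) ncl \<Rightarrow> 'e \<Rightarrow> bool \<Rightarrow> 'v" where
  "head M e b = (if b then snd (ends M e) else fst (ends M e))"

definition inward :: "('v, 'e) ncl \<Rightarrow> ('e \<Rightarrow> bool option) \<Rightarrow> 'e \<Rightarrow> 'v \<Rightarrow> bool" where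
  "inward M p e v \<longleftrightarrow> e \<in> edges M \<and> (\<exists>b. p e = Some b \<and> head M e b = v)"

definition legal_at :: "('v, 'e) ncl \<Rightarrow> ('e \<Rightarrow> bool option) \<Rightarrow> 'v \<Rightarrow> bool" where
  "legal_at M p v \<longleftrightarrow>
     (case kind M v of
        AND \<Rightarrow> inward M p (outp M v) v \<or>
               (\<forall>e\<in>edges M. v \<in> eset M e \<and> e \<noteq> outp M v \<longrightarrow> inward M p e v)
      | OR \<Rightarrow> (\<exists>e\<in>edges M. v \<in> eset M e \<and> inward M p e v))"

definition legal_partial :: "('v, 'e) ncl \<Rightarrow> ('e \<Rightarrow> bool option) \<Rightarrow> bool" where
  "legal_partial M p \<longleftrightarrow> (\<forall>v\<in>verts M. legal_at M p v)"

definition legal :: "('v, 'e) ncl \<Rightarrow> ('e \<Rightarrow> bool) \<Rightarrow> bool" where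
  "legal M c \<longleftrightarrow> legal_partial M (\<lambda>e. Some (c e))"

definition legal_move :: "('v, 'e) ncl \<Rightarrow> ('e \<Rightarrow> bool) \<Rightarrow> ('e \<Rightarrow> bool) \<Rightarrow> bool" where
  "legal_move M c c' \<longleftrightarrow> legal M c \<and> legal M c' \<and> (\<exists>e\<in>edges M. c' = c(e := \<not> c e))"

definition EE_NCL :: "('v, 'e) ncl \<Rightarrow> 'e \<Rightarrow> bool \<Rightarrow> 'e \<Rightarrow> bool \<Rightarrow> bool" where
  "EE_NCL M ea ta eb tb \<longleftrightarrow>
     (\<exists>A B. legal M A \<and> legal M B \<and> A ea = ta \<and> B eb = tb \<and> (legal_move M)\<^sup>*\<^sup>* A B)"

text \<open>An asynchronous schedule over the timespan [0,T]: initial configuration A and,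
for each edge, a finite set R e of reversal phases, each an open time interval (s,f)
with 0 \<le> s < f \<le> T; phases of the same edge do not overlap.\<close>

definition async_cfg ::
  "('e \<Rightarrow> bool) \<Rightarrow> ('e \<Rightarrow> (real \<times> real) set) \<Rightarrow> real \<Rightarrow> 'e \<Rightarrow> bool option" where
  "async_cfg A R t e =
     (if \<exists>(s, f)\<in>R e. s < t \<and> t < f then None
      else Some (A e \<noteq> odd (card {(s, f)\<in>R e. f \<le> t})))"

definition valid_schedule ::
  "('v, 'e) ncl \<Rightarrow> real \<Rightarrow> ('e \<Rightarrow> bool) \<Rightarrow> ('e \<Rightarrow> (real \<times> real) set) \<Rightarrow> bool" where
  "valid_schedule M T A R \<longleftrightarrow> 0 \<le> T \<and>
     (\<forall>e. finite (R e)) \<and>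
     (\<forall>e. e \<notin> edges M \<longrightarrow> R e = {}) \<and>
     (\<forall>e. \<forall>(s, f)\<in>R e. 0 \<le> s \<and> s < f \<and> f \<le> T) \<and>
     (\<forall>e. \<forall>(s, f)\<in>R e. \<forall>(s', f')\<in>R e. (s, f) \<noteq> (s', f') \<longrightarrow> f \<le> s' \<or> f' \<le> s) \<and>
     (\<forall>t\<in>{0..T}. legal_partial M (async_cfg A R t))"

definition EE_ANCL :: "('v, 'e) ncl \<Rightarrow> 'e \<Rightarrow> bool \<Rightarrow> 'e \<Rightarrow> bool \<Rightarrow> bool" where
  "EE_ANCL M ea ta eb tb \<longleftrightarrow>
     (\<exists>T A R. valid_schedule M T A R \<and> legal M A \<and> A ea = ta \<and>
              async_cfg A R T eb = Some tb)"

end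

theory Submission
  imports Defs
begin

definition compl :: "('e \<Rightarrow> bool option) \<Rightarrow> ('e \<Rightarrow> bool) \<Rightarrow> bool" where
  "compl p c \<longleftrightarrow> (\<forall>e b. p e = Some b \<longrightarrow> c e = b)"

lemma legal_at_mono:
  "(\<And>e. inward M p e v \<Longrightarrow> inward M q e v) \<Longrightarrow> legal_at M p v \<Longrightarrow> legal_at M q v"
  by (auto simp: legal_at_def split: vkind.splits)

lemma compl_legal:
  assumes "legal_partial M p" "compl p c" shows "legal M c"
  unfolding legal_def legal_partial_def
proof
  fix v assume "v \<in> verts M"
  then have "legal_at M p v" using assms(1) by (simp add: legal_partial_def)
  then show "legal_at M (\<lambda>e. Some (c e)) v"
    by (rule legal_at_mono[rotated]) (use assms(2) in \<open>auto simp: inward_def compl_def\<close>)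
qed

lemma compl_connect:
  assumes lp: "legal_partial M p" and fin: "finite (edges M)"
    and out: "\<forall>e. e \<notin> edges M \<longrightarrow> p e \<noteq> None"
  shows "card {e. c1 e \<noteq> c2 e} = n \<Longrightarrow> compl p c1 \<Longrightarrow> compl p c2 \<Longrightarrow> (legal_move M)\<^sup>*\<^sup>* c1 c2"
proof (induction n arbitrary: c1)
  case 0
  have sub: "{e. c1 e \<noteq> c2 e} \<subseteq> edges M"
    using out 0 by (auto simp: compl_def)
  then have "finite {e. c1 e \<noteq> c2 e}" using fin finite_subset by blast
  then have "c1 = c2" using 0 by auto
  then show ?case by simp
next
  case (Suc n)
  have sub: "{e. c1 e \<noteq> c2 e} \<subseteq> edges M"
    using out Suc by (auto simp: compl_def)
  have finD: "finite {e. c1 e \<noteq> c2 e}" using fin sub finite_subset by blast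
  obtain e where e: "c1 e \<noteq> c2 e" using Suc.prems(1)
    by (metis (mono_tags, lifting) Collect_empty_eq card.empty nat.simps(3))
  define c1' where "c1' = c1(e := c2 e)"
  have "{e. c1' e \<noteq> c2 e} = {e. c1 e \<noteq> c2 e} - {e}" by (auto simp: c1'_def)
  then have card': "card {e. c1' e \<noteq> c2 e} = n" using Suc.prems(1) e finD by simp
  have pe: "p e = None" using e Suc.prems unfolding compl_def by (cases "p e") auto
  have c1': "compl p c1'" using Suc.prems(2) pe by (auto simp: compl_def c1'_def)
  have "legal_move M c1 c1'"
    unfolding legal_move_def
    using compl_legal[OF lp Suc.prems(2)] compl_legal[OF lp c1'] sub e
    by (auto simp: c1'_def intro!: bexI[of _ e])
  moreover have "(legal_move M)\<^sup>*\<^sup>* c1' c2" using Suc.IH[OF card' c1' Suc.prems(3)] .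
  ultimately show ?case by (rule converse_rtranclp_into_rtranclp)
qed

lemma compl_connect':
  assumes "legal_partial M p" "finite (edges M)" "\<forall>e. e \<notin> edges M \<longrightarrow> p e \<noteq> None"
    "compl p c1" "compl p c2"
  shows "(legal_move M)\<^sup>*\<^sup>* c1 c2"
  using compl_connect[OF assms(1-3) refl assms(4,5)] .

lemma async_local_point:
  assumes vs: "valid_schedule M T A R"
    and D: "\<And>s f. (s, f) \<in> R e \<Longrightarrow> s \<noteq> t \<Longrightarrow> \<bar>t' - t\<bar> < \<bar>s - t\<bar>"
    and D2: "\<And>s f. (s, f) \<in> R e \<Longrightarrow> f \<noteq> t \<Longrightarrow> \<bar>t' - t\<bar> < \<bar>f - t\<bar>"
    and h: "async_cfg A R t' e = Some b"
  shows "async_cfg A R t e = Some b"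
proof -
  have sf: "\<And>s f. (s, f) \<in> R e \<Longrightarrow> s < f" using vs by (auto simp: valid_schedule_def)
  have np: "\<not> (\<exists>(s, f)\<in>R e. s < t' \<and> t' < f)" and
    b: "b = (A e \<noteq> odd (card {(s, f)\<in>R e. f \<le> t'}))"
    using h by (auto simp: async_cfg_def split: if_splits)
  have np2: "\<not> (\<exists>(s, f)\<in>R e. s < t \<and> t < f)"
  proof
    assume "\<exists>(s, f)\<in>R e. s < t \<and> t < f"
    then obtain s f where "(s, f) \<in> R e" "s < t" "t < f" by auto
    with D[of s f] D2[of s f] np show False by force
  qed
  have eq: "{(s, f)\<in>R e. f \<le> t'} = {(s, f)\<in>R e. f \<le> t}"
  proof (intro set_eqI iffI)
    fix x assume x: "x \<in> {(s, f)\<in>R e. f \<le> t'}"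
    obtain s f where xs: "x = (s, f)" by fastforce
    show "x \<in> {(s, f)\<in>R e. f \<le> t}"
    proof (cases "f = t")
      case False
      with D2[of s f] x xs show ?thesis by auto
    qed (use x xs in auto)
  next
    fix x assume x: "x \<in> {(s, f)\<in>R e. f \<le> t}"
    obtain s f where xs: "x = (s, f)" by fastforce
    have in1: "(s, f) \<in> R e" "f \<le> t" using x xs by auto
    show "x \<in> {(s, f)\<in>R e. f \<le> t'}"
    proof (cases "f = t")
      case False
      with D2[of s f] in1 xs show ?thesis by auto
    next
      case True
      have "s < f" using sf in1 by auto
      with D[of s f] in1 True np have "f \<le> t'" by force
      with in1 xs show ?thesis by auto
    qed
  qed
  show ?thesis using np2 b eq by (simp add: async_cfg_def)
qed

lemma async_local:
  assumes vs: "valid_schedule M T A R" and fin: "finite (edges M)"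
  shows "eventually (\<lambda>t'. \<forall>e b. async_cfg A R t' e = Some b \<longrightarrow> async_cfg A R t e = Some b)
           (at t within S)"
proof -
  define D where "D = (\<Union>e\<in>edges M. fst ` R e \<union> snd ` R e) - {t}"
  have finR: "\<And>e. finite (R e)" using vs by (simp add: valid_schedule_def)
  have "finite D" unfolding D_def using fin finR by auto
  moreover have "\<forall>x\<in>D. eventually (\<lambda>t'. \<bar>t' - t\<bar> < \<bar>x - t\<bar>) (at t within S)"
  proof
    fix x assume "x \<in> D"
    then have "\<bar>x - t\<bar> > 0" by (auto simp: D_def)
    then show "eventually (\<lambda>t'. \<bar>t' - t\<bar> < \<bar>x - t\<bar>) (at t within S)"
      unfolding eventually_at dist_real_def by blast
  qed
  ultimately have ev: "eventually (\<lambda>t'. \<forall>x\<in>D. \<bar>t' - t\<bar> < \<bar>x - t\<bar>) (at t within S)"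
    by (rule eventually_ball_finite)
  have out: "\<And>e. e \<notin> edges M \<Longrightarrow> R e = {}" using vs by (simp add: valid_schedule_def)
  show ?thesis
  proof (rule eventually_mono[OF ev], intro allI impI)
    fix t' e b
    assume H: "\<forall>x\<in>D. \<bar>t' - t\<bar> < \<bar>x - t\<bar>" and h: "async_cfg A R t' e = Some b"
    show "async_cfg A R t e = Some b"
    proof (rule async_local_point[OF vs _ _ h])
      fix s f assume "(s, f) \<in> R e" "s \<noteq> t"
      then have "s \<in> D" using out[of e] unfolding D_def by (cases "e \<in> edges M") force+
      then show "\<bar>t' - t\<bar> < \<bar>s - t\<bar>" using H by blast
    next
      fix s f assume "(s, f) \<in> R e" "f \<noteq> t"
      then have "f \<in> D" using out[of e] unfolding D_def by (cases "e \<in> edges M") force+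
      then show "\<bar>t' - t\<bar> < \<bar>f - t\<bar>" using H by blast
    qed
  qed
qed

lemma ancl_to_ncl:
  assumes vs: "valid_schedule M T A R" and fin: "finite (edges M)"
  shows "\<exists>c. compl (async_cfg A R T) c \<and> (legal_move M)\<^sup>*\<^sup>* A c"
proof -
  define reach where "reach t \<longleftrightarrow> (\<exists>c. compl (async_cfg A R t) c \<and> (legal_move M)\<^sup>*\<^sup>* A c)" for t
  have T0: "0 \<le> T" using vs by (simp add: valid_schedule_def)
  have lp: "\<And>t. t \<in> {0..T} \<Longrightarrow> legal_partial M (async_cfg A R t)"
    using vs by (simp add: valid_schedule_def)
  have out: "\<And>t. \<forall>e. e \<notin> edges M \<longrightarrow> async_cfg A R t e \<noteq> None"
    using vs by (auto simp: valid_schedule_def async_cfg_def)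
  have r0: "reach 0"
  proof -
    have "\<And>e. async_cfg A R 0 e = Some (A e)"
    proof -
      fix e
      have "\<forall>(s, f)\<in>R e. 0 \<le> s \<and> s < f \<and> f \<le> T"
        using vs by (simp add: valid_schedule_def)
      then have "\<And>s f. (s, f) \<in> R e \<Longrightarrow> 0 \<le> s \<and> s < f" by auto
      then have h1: "\<not> (\<exists>(s, f)\<in>R e. s < 0 \<and> 0 < f)" and h2: "{(s, f)\<in>R e. f \<le> 0} = {}"
        by (fastforce, fastforce)
      show "async_cfg A R 0 e = Some (A e)" unfolding async_cfg_def h2 using h1 by simp
    qed
    then have "compl (async_cfg A R 0) A" by (simp add: compl_def)
    then show ?thesis unfolding reach_def by blast
  qed
  have loc: "\<forall>a\<in>{0..T}. eventually (\<lambda>b. reach a = reach b) (at a within {0..T})"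
  proof
    fix a assume a: "a \<in> {0..T}"
    have ev1: "eventually (\<lambda>t'. \<forall>e b. async_cfg A R t' e = Some b \<longrightarrow> async_cfg A R a e = Some b)
           (at a within {0..T})" by (rule async_local[OF vs fin])
    have ev2: "eventually (\<lambda>t'. t' \<in> {0..T}) (at a within {0..T})"
      by (simp add: eventually_at_filter)
    show "eventually (\<lambda>b. reach a = reach b) (at a within {0..T})"
    proof (rule eventually_mono[OF eventually_conj[OF ev1 ev2]])
      fix t' assume H: "(\<forall>e b. async_cfg A R t' e = Some b \<longrightarrow> async_cfg A R a e = Some b) \<and> t' \<in> {0..T}"
      have sub: "\<And>c. compl (async_cfg A R a) c \<Longrightarrow> compl (async_cfg A R t') c"
        using H by (auto simp: compl_def)
      show "reach a = reach t'"
      proof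
        assume "reach a" then show "reach t'" using sub unfolding reach_def by blast
      next
        assume "reach t'"
        then obtain c' where c': "compl (async_cfg A R t') c'" "(legal_move M)\<^sup>*\<^sup>* A c'"
          unfolding reach_def by blast
        define c where "c e = (case async_cfg A R a e of Some b \<Rightarrow> b | None \<Rightarrow> c' e)" for e
        have ca: "compl (async_cfg A R a) c" by (auto simp: compl_def c_def)
        have "(legal_move M)\<^sup>*\<^sup>* c' c"
          by (rule compl_connect'[OF lp fin out c'(1) sub[OF ca]]) (use H in simp)
        then show "reach a" using c'(2) ca unfolding reach_def by (blast intro: rtranclp_trans)
      qed
    qed
  qed
  have "reach 0 = reach T"
  proof -
    have c: "connected {0..T}" by (rule connected_Icc)
    have m: "0 \<in> {0..T}" "T \<in> {0..T}" using T0 by auto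
    show ?thesis by (rule connected_local_const[OF c m loc])
  qed
  then show ?thesis using r0 unfolding reach_def by simp
qed

lemma flip_partial_legal:
  assumes sg: "simple_graph M" and e: "e \<in> edges M" and lB: "legal M B" and lC: "legal M C"
    and C: "C = B(e := \<not> B e)"
  shows "legal_partial M ((\<lambda>x. Some (B x))(e := None))"
  unfolding legal_partial_def
proof
  fix v assume v: "v \<in> verts M"
  have dist: "fst (ends M e) \<noteq> snd (ends M e)" using sg e by (simp add: simple_graph_def)
  show "legal_at M ((\<lambda>x. Some (B x))(e := None)) v"
  proof (cases "head M e (B e) = v")
    case True
    have "legal_at M (\<lambda>x. Some (C x)) v" using lC v by (simp add: legal_def legal_partial_def)
    then show ?thesis
      by (rule legal_at_mono[rotated]) (use True dist C in \<open>auto simp: inward_def head_def split: if_splits\<close>)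
  next
    case False
    have "legal_at M (\<lambda>x. Some (B x)) v" using lB v by (simp add: legal_def legal_partial_def)
    then show ?thesis
      by (rule legal_at_mono[rotated]) (use False in \<open>auto simp: inward_def\<close>)
  qed
qed

lemma async_late:
  assumes "\<forall>(s, f)\<in>R e. s < f \<and> f \<le> T" and "T \<le> t"
  shows "async_cfg A R t e = async_cfg A R T e"
proof -
  have "{(s, f)\<in>R e. f \<le> t} = R e" "{(s, f)\<in>R e. f \<le> T} = R e" using assms by auto
  moreover have "\<not> (\<exists>(s, f)\<in>R e. s < t \<and> t < f)" "\<not> (\<exists>(s, f)\<in>R e. s < T \<and> T < f)"
    using assms by auto
  ultimately show ?thesis by (simp add: async_cfg_def)
qed

lemma schedule_step:
  assumes vs: "valid_schedule M T A R" and cur: "\<forall>x. async_cfg A R T x = Some (B x)"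
    and mv: "legal_move M B C" and sg: "simple_graph M"
  shows "\<exists>T' R'. valid_schedule M T' A R' \<and> (\<forall>x. async_cfg A R' T' x = Some (C x))"
proof -
  obtain e where e: "e \<in> edges M" and C: "C = B(e := \<not> B e)" and lB: "legal M B" and lC: "legal M C"
    using mv by (auto simp: legal_move_def)
  have ph: "\<And>x. \<forall>(s, f)\<in>R x. 0 \<le> s \<and> s < f \<and> f \<le> T" using vs by (simp add: valid_schedule_def)
  define R' where "R' = R(e := insert (T, T + 1) (R e))"
  have T0: "0 \<le> T" using vs by (simp add: valid_schedule_def)
  have notin: "(T, T + 1) \<notin> R e" using ph[of e] by auto
  have early: "async_cfg A R' t x = async_cfg A R t x" if "t \<le> T" for t x
  proof (cases "x = e")
    case True
    have "{(s, f)\<in>R' e. f \<le> t} = {(s, f)\<in>R e. f \<le> t}" using that by (auto simp: R'_def)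
    moreover have "(\<exists>(s, f)\<in>R' e. s < t \<and> t < f) = (\<exists>(s, f)\<in>R e. s < t \<and> t < f)"
      using that by (auto simp: R'_def)
    ultimately show ?thesis using True by (simp add: async_cfg_def)
  qed (simp add: R'_def async_cfg_def)
  have mid: "async_cfg A R' t x = ((\<lambda>x. Some (B x))(e := None)) x" if "T < t" "t < T + 1" for t x
  proof (cases "x = e")
    case True
    have "(T, T + 1) \<in> R' e" by (simp add: R'_def)
    then have "\<exists>(s, f)\<in>R' e. s < t \<and> t < f" using that by blast
    then show ?thesis using True by (simp add: async_cfg_def)
  next
    case False
    have "async_cfg A R' t x = async_cfg A R t x" using False by (simp add: R'_def async_cfg_def)
    also have "\<dots> = async_cfg A R T x" by (rule async_late) (use ph[of x] that in auto)
    finally show ?thesis using cur False by simp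
  qed
  have fin_end: "async_cfg A R' (T + 1) x = Some (C x)" for x
  proof (cases "x = e")
    case True
    have finRe: "finite (R e)" using vs by (simp add: valid_schedule_def)
    have s1: "{(s, f)\<in>R' e. f \<le> T + 1} = insert (T, T + 1) (R e)" using ph[of e] by (auto simp: R'_def)
    have s0: "{(s, f)\<in>R e. f \<le> T} = R e" using ph[of e] by auto
    have np: "\<not> (\<exists>(s, f)\<in>R' e. s < T + 1 \<and> T + 1 < f)" using ph[of e] by (auto simp: R'_def)
    have np0: "\<not> (\<exists>(s, f)\<in>R e. s < T \<and> T < f)" using ph[of e] by auto
    have "async_cfg A R T e = Some (A e \<noteq> odd (card (R e)))"
      using np0 s0 by (simp add: async_cfg_def)
    then have "B e = (A e \<noteq> odd (card (R e)))" using cur by simp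
    moreover have "async_cfg A R' (T + 1) e = Some (A e \<noteq> odd (Suc (card (R e))))"
      using np s1 notin finRe by (simp add: async_cfg_def)
    ultimately show ?thesis using True C by simp
  next
    case False
    have "async_cfg A R' (T + 1) x = async_cfg A R (T + 1) x" using False by (simp add: R'_def async_cfg_def)
    also have "\<dots> = async_cfg A R T x" by (rule async_late) (use ph[of x] in auto)
    finally show ?thesis using cur False C by simp
  qed
  have lpart: "legal_partial M ((\<lambda>x. Some (B x))(e := None))"
    by (rule flip_partial_legal[OF sg e lB lC C])
  have "valid_schedule M (T + 1) A R'"
    unfolding valid_schedule_def
  proof (intro conjI)
    show "0 \<le> T + 1" using vs by (simp add: valid_schedule_def)
    show "\<forall>x. finite (R' x)" using vs by (simp add: valid_schedule_def R'_def)
    show "\<forall>x. x \<notin> edges M \<longrightarrow> R' x = {}" using vs e by (auto simp: valid_schedule_def R'_def)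
    show "\<forall>x. \<forall>(s, f)\<in>R' x. 0 \<le> s \<and> s < f \<and> f \<le> T + 1"
    proof (intro allI)
      fix x
      show "\<forall>(s, f)\<in>R' x. 0 \<le> s \<and> s < f \<and> f \<le> T + 1"
        using ph[of x] T0 unfolding R'_def by (cases "x = e") auto
    qed
    show "\<forall>x. \<forall>(s, f)\<in>R' x. \<forall>(s', f')\<in>R' x. (s, f) \<noteq> (s', f') \<longrightarrow> f \<le> s' \<or> f' \<le> s"
    proof (intro allI)
      fix x
      show "\<forall>(s, f)\<in>R' x. \<forall>(s', f')\<in>R' x. (s, f) \<noteq> (s', f') \<longrightarrow> f \<le> s' \<or> f' \<le> s"
      proof (cases "x = e")
        case False then show ?thesis using vs by (simp add: R'_def valid_schedule_def)
      next
        case True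
        have old: "\<forall>(s, f)\<in>R e. \<forall>(s', f')\<in>R e. (s, f) \<noteq> (s', f') \<longrightarrow> f \<le> s' \<or> f' \<le> s"
          using vs by (simp add: valid_schedule_def)
        have key: "\<And>s f. (s, f) \<in> R e \<Longrightarrow> s < f \<and> f \<le> T" using ph[of e] by auto
        have H: "f \<le> s' \<or> f' \<le> s"
          if a: "(s, f) \<in> R' x" and b: "(s', f') \<in> R' x" and ne: "(s, f) \<noteq> (s', f')" for s f s' f'
        proof -
          have a': "(s, f) = (T, T + 1) \<or> (s, f) \<in> R e" using a True by (simp add: R'_def)
          have b': "(s', f') = (T, T + 1) \<or> (s', f') \<in> R e" using b True by (simp add: R'_def)
          show "f \<le> s' \<or> f' \<le> s"
          proof (cases "(s, f) \<in> R e \<and> (s', f') \<in> R e")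
            case True then show ?thesis using old ne by blast
          next
            case False
            then show ?thesis using a' b' ne key by force
          qed
        qed
        show ?thesis using H by blast
      qed
    qed
    show "\<forall>t\<in>{0..T + 1}. legal_partial M (async_cfg A R' t)"
    proof
      fix t assume t: "t \<in> {0..T + 1}"
      consider "t \<le> T" | "T < t" "t < T + 1" | "t = T + 1" using t by force
      then show "legal_partial M (async_cfg A R' t)"
      proof cases
        case 1
        then have "async_cfg A R' t = async_cfg A R t" using early by blast
        then show ?thesis using vs t 1 by (simp add: valid_schedule_def)
      next
        case 2
        then have "async_cfg A R' t = (\<lambda>x. Some (B x))(e := None)" using mid by blast
        then show ?thesis using lpart by simp
      next
        case 3
        then have "async_cfg A R' t = (\<lambda>x. Some (C x))" using fin_end by blast
        then show ?thesis using lC by (simp add: legal_def)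
      qed
    qed
  qed
  then show ?thesis using fin_end by blast
qed


lemma ncl_to_ancl:
  assumes "(legal_move M)\<^sup>*\<^sup>* A B" and lA: "legal M A" and sg: "simple_graph M"
  shows "\<exists>T R. valid_schedule M T A R \<and> (\<forall>x. async_cfg A R T x = Some (B x))"
  using assms(1)
proof (induction rule: rtranclp_induct)
  case base
  have "\<And>t. async_cfg A (\<lambda>_. {}) t = (\<lambda>x. Some (A x))" by (auto simp: async_cfg_def)
  then have "valid_schedule M 0 A (\<lambda>_. {})" using lA by (simp add: valid_schedule_def legal_def)
  moreover have "\<forall>x. async_cfg A (\<lambda>_. {}) 0 x = Some (A x)" by (simp add: async_cfg_def)
  ultimately show ?case by blast
next
  case (step B C)
  then obtain T R where "valid_schedule M T A R" "\<forall>x. async_cfg A R T x = Some (B x)" by blast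
  then show ?case using schedule_step[OF _ _ step.hyps(2) sg] by blast
qed

theorem theorem1:
  fixes M :: "('v, 'e) ncl" and ea eb :: 'e and ta tb :: bool
  assumes "ncl_machine M" and "ea \<in> edges M" and "eb \<in> edges M"
  shows "EE_NCL M ea ta eb tb \<longleftrightarrow> EE_ANCL M ea ta eb tb"
proof
  have sg: "simple_graph M" using assms(1) by (simp add: ncl_machine_def)
  then have fin: "finite (edges M)" by (simp add: simple_graph_def)
  {
    assume "EE_NCL M ea ta eb tb"
    then obtain A B where AB: "legal M A" "legal M B" "A ea = ta" "B eb = tb" "(legal_move M)\<^sup>*\<^sup>* A B"
      unfolding EE_NCL_def by blast
    obtain T R where "valid_schedule M T A R" "\<forall>x. async_cfg A R T x = Some (B x)"
      using ncl_to_ancl[OF AB(5,1) sg] by blast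
    then show "EE_ANCL M ea ta eb tb" unfolding EE_ANCL_def using AB by auto
  }
  {
    assume "EE_ANCL M ea ta eb tb"
    then obtain T A R where H: "valid_schedule M T A R" "legal M A" "A ea = ta" "async_cfg A R T eb = Some tb"
      unfolding EE_ANCL_def by blast
    obtain c where c: "compl (async_cfg A R T) c" "(legal_move M)\<^sup>*\<^sup>* A c"
      using ancl_to_ncl[OF H(1) fin] by blast
    have "legal_partial M (async_cfg A R T)" using H(1) by (simp add: valid_schedule_def)
    then have "legal M c" using c(1) by (rule compl_legal)
    moreover have "c eb = tb" using c(1) H(4) by (simp add: compl_def)
    ultimately show "EE_NCL M ea ta eb tb" unfolding EE_NCL_def using H c by blast
  }
qed

end
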